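(* Let $C_k(T)=T-\sin(Tk)/\sin k$. Fix $\alpha\in\{1/3,1/7\}$, and for $T\in\mathbb N^+$ let $k_1<k_2<\dots<k_T$ be the $T$ solutions in $(0,\pi)$ of $-\alpha\tan(k/2)=\tan(Tk)$. There exists $T_0\in\mathbb N^+$ such that for all $T>T_0$: (1) $C_{k_t}(T)/C_{k_t}(2T)\le5/6$ for $t=2,3,\dots,T-1$; (2) $C_{k_1}(T)/C_{k_1}(2T)^2\le1/96$ and $C_{k_T}(T)/C_{k_T}(2T)^2\le1/96$. *)

theory Defs
  imports Complex_Main
begin

definition Cfun :: "real \<Rightarrow> nat \<Rightarrow> real" where
  "Cfun k T = real T - sin (real T * k) / sin k"

end

theory Submission imports Defs "HOL-Analysis.Analysis" begin
lemma sin_cubic: assumes "0 \<le> (x::real)" shows "x - x^3/6 \<le> sin x"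
proof -
  have "\<bar>sin x - x\<bar> \<le> inverse (fact 3) * \<bar>x\<bar> ^ 3"
    using Maclaurin_sin_bound[of x 3] by (simp add: eval_nat_numeral sin_coeff_def)
  then have "\<bar>sin x - x\<bar> \<le> x^3/6" using assms by (simp add: eval_nat_numeral)
  then show ?thesis by linarith
qed
lemma cos_quad: "1 - x^2/2 \<le> cos (x::real)"
proof -
  have "cos x = 1 - 2 * (sin (x/2))^2"
    using cos_double_sin[of "x/2"] by simp
  moreover have "(sin (x/2))^2 \<le> (x/2)^2"
    using abs_sin_x_le_abs_x[of "x/2"] by (metis abs_ge_zero power2_abs power_mono)
  ultimately show ?thesis by (simp add: power_divide)
qed
lemma abs_sin_nat: "\<bar>sin (real n * x)\<bar> \<le> real n * \<bar>sin x\<bar>"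
proof (induction n)
  case 0 then show ?case by simp
next
  case (Suc n)
  have "sin (real (Suc n) * x) = sin (real n * x) * cos x + cos (real n * x) * sin x"
    by (simp add: distrib_right sin_add)
  also have "\<bar>\<dots>\<bar> \<le> \<bar>sin (real n * x)\<bar> + \<bar>sin x\<bar>"
  proof -
    have "\<bar>sin (real n * x) * cos x\<bar> \<le> \<bar>sin (real n * x)\<bar>"
      by (simp add: abs_mult mult_left_le)
    moreover have "\<bar>cos (real n * x) * sin x\<bar> \<le> \<bar>sin x\<bar>"
      by (simp add: abs_mult mult_left_le_one_le)
    ultimately show ?thesis by (smt (verit) abs_triangle_ineq)
  qed
  finally show ?case using Suc by (simp add: distrib_right)
qed
lemma pi_bounds: "31415/10000 \<le> pi" "pi \<le> 31416/10000"
  using pi_approx by auto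

lemma keyK:
  fixes u :: real and T :: nat
  assumes u: "0 < u" "u \<le> pi/2" and T: "T \<ge> 49"
  shows "\<bar>sin (real T * u)\<bar> * (6 - 10 * \<bar>cos (real T * u)\<bar>) \<le> 4 * real T * sin u"
proof -
  define y where "y = real T * u"
  have Tr: "real T \<ge> 49" using T by simp
  have y0: "y > 0" using u Tr by (simp add: y_def)
  have L6: "\<bar>sin y\<bar> * (6 - 10 * \<bar>cos y\<bar>) \<le> 6"
  proof -
    have "\<bar>sin y\<bar> * (6 - 10 * \<bar>cos y\<bar>) \<le> \<bar>sin y\<bar> * 6"
      by (rule mult_left_mono) auto
    also have "\<dots> \<le> 6" using abs_sin_le_one[of y] by linarith
    finally show ?thesis .
  qed
  have "\<bar>sin y\<bar> * (6 - 10 * \<bar>cos y\<bar>) \<le> 4 * real T * sin u"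
  proof (cases "y \<ge> 3")
    case True
    have "real T * sin u \<ge> 3/2"
    proof (cases "u \<le> 1")
      case True
      have "u^3 \<le> u" using True u by (simp add: power_le_one power3_eq_cube mult_le_one)
      hence "sin u \<ge> 5/6 * u" using sin_cubic[of u] u by simp
      hence "real T * sin u \<ge> real T * (5/6 * u)" by (intro mult_left_mono) auto
      thus ?thesis using \<open>y \<ge> 3\<close> by (simp add: y_def)
    next
      case False
      have "sin u = cos (pi/2 - u)" by (simp add: cos_diff)
      moreover have "(pi/2 - u)^2 \<le> 1/2"
      proof -
        have "0 \<le> pi/2 - u" "pi/2 - u \<le> (6/10)" using u False pi_bounds by auto
        hence "(pi/2 - u)^2 \<le> (6/10)^2" by (intro power_mono) auto
        also have "((6/10)::real)^2 \<le> 1/2" by (simp add: power2_eq_square)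
        finally show ?thesis .
      qed
      ultimately have "sin u \<ge> 3/4" using cos_quad[of "pi/2 - u"] by simp
      hence "real T * sin u \<ge> 49 * (3/4)" using Tr by (intro mult_mono) auto
      thus ?thesis by simp
    qed
    thus ?thesis using L6 by simp
  next
    case False
    have "sin u \<ge> u - u^3/6" using sin_cubic u by simp
    hence "real T * sin u \<ge> real T * (u - u^3/6)" using Tr by (simp add: mult_left_mono)
    moreover have "real T * (u - u^3/6) = y - y * (y^2 / (6 * (real T)^2))"
      using Tr by (simp add: y_def field_simps power2_eq_square power3_eq_cube)
    moreover have "y^2 / (6 * (real T)^2) \<le> 1/1000"
    proof -
      have "y^2 \<le> 3^2" using False y0 by (intro power_mono) auto
      hence "y^2 \<le> 9" by simp
      moreover have "(real T)^2 \<ge> 2401"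
      proof -
        have "(real T)^2 \<ge> 49^2" using Tr by (intro power_mono) auto
        thus ?thesis by simp
      qed
      ultimately have "y^2 \<le> 1/1000 * (6 * (real T)^2)" by linarith
      moreover have "0 < 6 * (real T)^2" using Tr by simp
      ultimately show ?thesis by (simp add: pos_divide_le_eq)
    qed
    moreover have "y * (y^2 / (6 * (real T)^2)) \<le> y * (1/1000)"
      using y0 calculation(3) by (intro mult_left_mono) auto
    ultimately have TS: "real T * sin u \<ge> (999/1000) * y"
      by linarith
    have "\<bar>sin y\<bar> * (6 - 10 * \<bar>cos y\<bar>) \<le> (3996/1000) * y"
    proof (cases "y \<ge> pi/2")
      case True
      thus ?thesis using L6 pi_bounds by linarith
    next
      case False
      have sy: "sin y \<ge> 0" using y0 False by (intro sin_ge_zero) auto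
      have cy: "cos y \<ge> 0" using y0 False by (intro cos_ge_zero) auto
      show ?thesis
      proof (cases "cos y \<ge> (6/10)")
        case True
        have "\<bar>sin y\<bar> * (6 - 10 * \<bar>cos y\<bar>) \<le> 0"
          using True cy by (intro mult_nonneg_nonpos) auto
        thus ?thesis using y0 by linarith
      next
        case c6: False
        have "1 - y^2/2 < (6/10)" using cos_quad[of y] c6 by linarith
        hence "y^2 > (8/10)" by simp
        hence "y > (89/100)"
        proof -
          { assume "y \<le> (89/100)"
            hence "y^2 \<le> (89/100)^2" using y0 by (intro power_mono) auto
            hence False using \<open>y^2 > (8/10)\<close> by (simp add: power2_eq_square) }
          thus ?thesis using not_le by blast
        qed
        define z where "z = pi/2 - y"
        have z0: "z \<ge> 0" "z \<le> (69/100)" using False \<open>y > (89/100)\<close> pi_bounds by (auto simp: z_def)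
        have siny: "sin y = cos z" and cosy: "cos y = sin z" by (simp_all add: z_def cos_diff sin_diff)
        have "sin (2*z) \<ge> 2*z - (2*z)^3/6" using sin_cubic[of "2*z"] z0 by simp
        hence scz: "sin y * cos y \<ge> z - 2/3 * z^3"
        proof -
          have "sin (2*z) = 2 * (cos z * sin z)" by (simp add: sin_double)
          thus ?thesis using \<open>sin (2*z) \<ge> 2*z - (2*z)^3/6\<close> siny cosy
            by (simp add: power3_eq_cube)
        qed
        have "\<bar>sin y\<bar> * (6 - 10 * \<bar>cos y\<bar>) = 6 * sin y - 10 * (sin y * cos y)"
          using sy cy by (simp add: algebra_simps)
        also have "\<dots> \<le> 6 - 10 * (z - 2/3 * z^3)"
        proof -
          have A: "10 * (z - 2/3 * z^3) \<le> 10 * (sin y * cos y)" using scz by (rule mult_left_mono) simp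
          have B: "6 * sin y \<le> 6" by simp
          show ?thesis using A B by linarith
        qed
        also have "\<dots> \<le> (3996/1000) * y"
        proof -
          have "z^2 \<le> (69/100)^2" using z0 by (intro power_mono) auto
          hence "z * z^2 \<le> z * (69/100)^2" using z0 by (intro mult_left_mono) auto
          hence "z^3 \<le> (48/100) * z" using z0 by (simp add: power3_eq_cube power2_eq_square)
          thus ?thesis using pi_bounds z0 by (simp add: z_def)
        qed
        finally show ?thesis .
      qed
    qed
    thus ?thesis using TS y0 by linarith
  qed
  thus ?thesis by (simp add: y_def)
qed

lemma keyX:
  fixes x :: real and T :: nat
  assumes x: "0 < x" "x < pi" and T: "T \<ge> 49"
  shows "\<bar>sin (real T * x)\<bar> * (6 - 10 * \<bar>cos (real T * x)\<bar>) \<le> 4 * real T * sin x"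
proof (cases "x \<le> pi/2")
  case True
  then show ?thesis using keyK[of x T] x T by simp
next
  case False
  define u where "u = pi - x"
  have u: "0 < u" "u \<le> pi/2" using x False by (auto simp: u_def)
  have e: "real T * x = real T * pi - real T * u" by (simp add: u_def algebra_simps)
  have "\<bar>sin (real T * x)\<bar> = \<bar>sin (real T * u)\<bar>"
    unfolding e sin_diff by (simp add: sin_npi cos_npi abs_mult)
  moreover have "\<bar>cos (real T * x)\<bar> = \<bar>cos (real T * u)\<bar>"
    unfolding e cos_diff by (simp add: sin_npi cos_npi abs_mult)
  moreover have "sin x = sin u" by (simp add: u_def)
  ultimately show ?thesis using keyK[OF u T] by simp
qed

lemma root_bounds:
  fixes x :: real and T :: nat
  assumes x: "0 < x" "x < pi" and T: "T \<ge> 49"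
    and neg: "sin (real T * x) * cos (real T * x) < 0"
  shows "Cfun x T / Cfun x (2 * T) \<le> 5/6 \<and> Cfun x T / (Cfun x (2 * T))^2 \<le> 1/96"
proof -
  define S where "S = sin x"
  define \<sigma> where "\<sigma> = sin (real T * x)"
  define c where "c = cos (real T * x)"
  have S0: "S > 0" using x by (simp add: S_def sin_gt_zero)
  have Tr: "real T \<ge> 49" using T by simp
  have C1: "Cfun x T = real T - \<sigma> / S" by (simp add: Cfun_def \<sigma>_def S_def)
  define D where "D = real T - \<sigma> * c / S"
  have C2: "Cfun x (2 * T) = 2 * D"
  proof -
    have "real (2 * T) * x = 2 * (real T * x)" by simp
    hence "sin (real (2 * T) * x) = 2 * \<sigma> * c" by (simp only: sin_double \<sigma>_def c_def)
    hence "Cfun x (2 * T) = 2 * real T - (2 * \<sigma> * c) / S" by (simp add: Cfun_def S_def)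
    also have "\<dots> = 2 * D" by (simp add: D_def right_diff_distrib)
    finally show ?thesis .
  qed
  have neg0: "\<sigma> * c < 0" using neg by (simp only: \<sigma>_def c_def)
  have "\<sigma> * c / S < 0" using neg0 S0 by (rule divide_neg_pos)
  hence DT: "D > real T" by (simp add: D_def)
  have sb: "\<bar>\<sigma>\<bar> \<le> real T * S"
  proof -
    have "\<bar>sin (real T * x)\<bar> \<le> real T * \<bar>sin x\<bar>" by (rule abs_sin_nat)
    moreover have "\<bar>sin x\<bar> = S" using S0 by (simp add: S_def)
    ultimately show ?thesis by (simp only: \<sigma>_def)
  qed
  have "\<bar>\<sigma> / S\<bar> = \<bar>\<sigma>\<bar> / S" using S0 by simp
  also have "\<dots> \<le> real T" using sb S0 by (simp add: pos_divide_le_eq)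
  finally have "\<bar>\<sigma> / S\<bar> \<le> real T" .
  hence N2: "Cfun x T \<le> 2 * real T" using C1 by linarith
  have part2: "Cfun x T / (Cfun x (2 * T))^2 \<le> 1/96"
  proof -
    have "(real T)^2 \<le> D^2" using DT Tr by (intro power_mono) auto
    moreover have "(real T)^2 \<ge> 49 * real T" using Tr by (simp add: power2_eq_square)
    moreover have "(2 * D)^2 = 4 * D^2" by (simp add: power_mult_distrib)
    ultimately have "2 * real T \<le> (2 * D)^2 / 96" by linarith
    hence "Cfun x T \<le> (2 * D)^2 / 96" using N2 by linarith
    hence "Cfun x T \<le> (Cfun x (2 * T))^2 / 96" by (simp only: C2)
    moreover have "(Cfun x (2 * T))^2 > 0" using C2 DT Tr by simp
    ultimately show ?thesis by (simp add: divide_le_eq)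
  qed
  have key: "\<sigma> * (10 * c - 6) \<le> 4 * real T * S"
  proof (cases "\<sigma> \<ge> 0")
    case True
    have neg': "\<sigma> * c < 0" using neg by (simp add: \<sigma>_def c_def)
    hence "c < 0" using True by (auto simp: mult_less_0_iff)
    hence "\<sigma> * (10 * c - 6) \<le> 0" using True by (intro mult_nonneg_nonpos) auto
    moreover have "0 \<le> 4 * real T * S" using S0 by simp
    ultimately show ?thesis by linarith
  next
    case False
    hence "c > 0" using neg by (simp add: \<sigma>_def c_def mult_less_0_iff)
    hence "\<sigma> * (10 * c - 6) = \<bar>\<sigma>\<bar> * (6 - 10 * \<bar>c\<bar>)" using False by (simp add: algebra_simps)
    thus ?thesis using keyX[OF x T] by (simp add: \<sigma>_def c_def S_def)
  qed
  have part1: "Cfun x T / Cfun x (2 * T) \<le> 5/6"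
  proof -
    have "\<sigma> * (10 * c - 6) / S \<le> 4 * real T" using key S0 by (simp add: pos_divide_le_eq)
    moreover have "\<sigma> * (10 * c - 6) / S = 10 * (\<sigma> * c / S) - 6 * (\<sigma> / S)"
      by (simp add: right_diff_distrib diff_divide_distrib mult.commute mult.left_commute)
    ultimately have "10 * (\<sigma> * c / S) - 6 * (\<sigma> / S) \<le> 4 * real T" by linarith
    moreover have "real T - a \<le> 5/6 * (2 * (real T - b))" if "10 * b - 6 * a \<le> 4 * real T" for a b
      using that by (simp add: algebra_simps)
    ultimately have "Cfun x T \<le> 5/6 * Cfun x (2 * T)" unfolding C1 C2 D_def by blast
    moreover have "Cfun x (2 * T) > 0" using C2 DT Tr by simp
    ultimately show ?thesis by (simp add: divide_le_eq)
  qed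
  show ?thesis using part1 part2 by simp
qed

theorem lemma13:
  fixes \<alpha> :: real
  assumes "\<alpha> = 1/3 \<or> \<alpha> = 1/7"
  shows "\<exists>T0::nat. T0 \<ge> 1 \<and>
    (\<forall>T::nat. T > T0 \<longrightarrow>
      (\<forall>k :: nat \<Rightarrow> real.
         strict_mono_on {1..T} k \<and>
         k ` {1..T} = {x. 0 < x \<and> x < pi \<and> - \<alpha> * tan (x / 2) = tan (real T * x)}
         \<longrightarrow>
         (\<forall>t\<in>{2..T-1}. Cfun (k t) T / Cfun (k t) (2 * T) \<le> 5/6) \<and>
         Cfun (k 1) T / (Cfun (k 1) (2 * T))^2 \<le> 1/96 \<and>
         Cfun (k T) T / (Cfun (k T) (2 * T))^2 \<le> 1/96))"
proof -
  have a0: "\<alpha> > 0" using assms by auto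
  have main: "Cfun (k t) T / Cfun (k t) (2 * T) \<le> 5/6 \<and> Cfun (k t) T / (Cfun (k t) (2 * T))^2 \<le> 1/96"
    if T: "T \<ge> 49" and im: "k ` {1..T} = {x. 0 < x \<and> x < pi \<and> - \<alpha> * tan (x / 2) = tan (real T * x)}"
      and t: "t \<in> {1..T}" for T :: nat and k :: "nat \<Rightarrow> real" and t
  proof -
    have "k t \<in> k ` {1..T}" using t by blast
    hence x: "0 < k t" "k t < pi" and eq: "- \<alpha> * tan (k t / 2) = tan (real T * k t)"
      using im by auto
    have "tan (k t / 2) > 0" using x by (intro tan_gt_zero) auto
    hence "tan (real T * k t) < 0" using eq a0 by (metis mult_pos_pos neg_less_0_iff_less mult_minus_left)
    hence "sin (real T * k t) / cos (real T * k t) < 0" by (simp add: tan_def)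
    hence "sin (real T * k t) * cos (real T * k t) < 0" by (simp add: divide_less_0_iff mult_less_0_iff)
    thus ?thesis using root_bounds[OF x T] by blast
  qed
  show ?thesis
  proof (rule exI[of _ 48], intro conjI allI impI)
    fix T :: nat and k :: "nat \<Rightarrow> real"
    assume "48 < T" and H: "strict_mono_on {1..T} k \<and>
         k ` {1..T} = {x. 0 < x \<and> x < pi \<and> - \<alpha> * tan (x / 2) = tan (real T * x)}"
    have T: "T \<ge> 49" using \<open>48 < T\<close> by simp
    have im: "k ` {1..T} = {x. 0 < x \<and> x < pi \<and> - \<alpha> * tan (x / 2) = tan (real T * x)}" using H by blast
    show "\<forall>t\<in>{2..T-1}. Cfun (k t) T / Cfun (k t) (2 * T) \<le> 5/6"
    proof
      fix t assume "t \<in> {2..T-1}"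
      hence "t \<in> {1..T}" by auto
      thus "Cfun (k t) T / Cfun (k t) (2 * T) \<le> 5/6" using main[OF T im] by blast
    qed
    show "Cfun (k 1) T / (Cfun (k 1) (2 * T))^2 \<le> 1/96"
      using main[OF T im, of 1] T by auto
    show "Cfun (k T) T / (Cfun (k T) (2 * T))^2 \<le> 1/96"
      using main[OF T im, of T] T by auto
  qed simp
qed
end
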